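(* Let $G$ be a finite non-abelian group such that $G/Z(G)\cong \mathbb{Z}_p\times\mathbb{Z}_p$ for a prime $p$. Put $z=|Z(G)|$ and $n=\frac{(p-1)z}{p}$. Then $\mathrm{Spec}(\Gamma_G)=\{[0]^{(p+1)(n-1)},[-n]^{p},[np]^1\}$, $\mathrm{L\text{-}Spec}(\Gamma_G)=\{[0]^1,[np]^{(p+1)(n-1)},[(p+1)n]^{p}\}$, $\mathrm{Q\text{-}Spec}(\Gamma_G)=\{[np]^{(p+1)(n-1)},[n(p-1)]^{p},[2np]^1\}$, and $E(\Gamma_G)=LE(\Gamma_G)=SE(\Gamma_G)=2np$.
   Context: For a finite non-abelian group $G$ with center $Z(G)$ and $x\in G$, $x^G$ is the conjugacy class of $x$. The non-commuting conjugacy class graph (NCCC-graph) $\Gamma_G$ is the simple undirected graph with vertex set $\{x^G: x\in G\setminus Z(G)\}$, in which distinct vertices $x^G,y^G$ are adjacent iff $x'y'\neq y'x'$ for all $x'\in x^G$, $y'\in y^G$. For a simple graph $\mathcal G$ with adjacency matrix $A$ and diagonal degree matrix $D$, let $L=D-A$ and $Q=D+A$; $\mathrm{Spec}$, $\mathrm{L\text{-}Spec}$, $\mathrm{Q\text{-}Spec}$ denote the multisets of eigenvalues of $A$, $L$, $Q$, written $\{[\lambda_1]^{k_1},\dots\}$ where $[\lambda]^k$ means eigenvalue $\lambda$ of multiplicity $k$ (a term with multiplicity $0$ is absent). $E(\mathcal G)=\sum_{\lambda\in\mathrm{Spec}}|\lambda|$; with $\Delta(\mathcal G)=2|E(\mathcal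 G)|/|V(\mathcal G)|$ (twice the number of edges over the number of vertices), $LE(\mathcal G)=\sum_{\beta\in \mathrm{L\text{-}Spec}}|\beta-\Delta(\mathcal G)|$ and $SE(\mathcal G)=\sum_{\gamma\in\mathrm{Q\text{-}Spec}}|\gamma-\Delta(\mathcal G)|$ (sums with multiplicity). *)

theory Defs
  imports "HOL-Algebra.Algebra" "Jordan_Normal_Form.Char_Poly"
begin

definition grp_center :: "('a, 'b) monoid_scheme \<Rightarrow> 'a set" where
  "grp_center G = {z \<in> carrier G. \<forall>g \<in> carrier G. z \<otimes>\<^bsub>G\<^esub> g = g \<otimes>\<^bsub>G\<^esub> z}"

definition conj_class :: "('a, 'b) monoid_scheme \<Rightarrow> 'a \<Rightarrow> 'a set" where
  "conj_class G x = {g \<otimes>\<^bsub>G\<^esub> x \<otimes>\<^bsub>G\<^esub> inv\<^bsub>G\<^esub> g | g. g \<in> carrier G}"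

definition nccc_vertices :: "('a, 'b) monoid_scheme \<Rightarrow> 'a set set" where
  "nccc_vertices G = conj_class G ` (carrier G - grp_center G)"

definition nccc_adj :: "('a, 'b) monoid_scheme \<Rightarrow> 'a set \<Rightarrow> 'a set \<Rightarrow> bool" where
  "nccc_adj G V W \<longleftrightarrow> V \<noteq> W \<and>
     (\<forall>x \<in> V. \<forall>y \<in> W. x \<otimes>\<^bsub>G\<^esub> y \<noteq> y \<otimes>\<^bsub>G\<^esub> x)"

text \<open>A fixed enumeration of the vertices (the spectra do not depend on the choice).\<close>
definition nccc_vlist :: "('a, 'b) monoid_scheme \<Rightarrow> 'a set list" where
  "nccc_vlist G = (SOME vs. distinct vs \<and> set vs = nccc_vertices G)"

definition nccc_adj_mat :: "('a, 'b) monoid_scheme \<Rightarrow> real mat" where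
  "nccc_adj_mat G = (let vs = nccc_vlist G in
     mat (length vs) (length vs)
       (\<lambda>(i, j). if nccc_adj G (vs ! i) (vs ! j) then 1 else 0))"

definition nccc_deg_mat :: "('a, 'b) monoid_scheme \<Rightarrow> real mat" where
  "nccc_deg_mat G = (let A = nccc_adj_mat G in
     mat (dim_row A) (dim_row A)
       (\<lambda>(i, j). if i = j then (\<Sum>k < dim_row A. A $$ (i, k)) else 0))"

definition nccc_lap_mat :: "('a, 'b) monoid_scheme \<Rightarrow> real mat" where
  "nccc_lap_mat G = nccc_deg_mat G - nccc_adj_mat G"

definition nccc_slap_mat :: "('a, 'b) monoid_scheme \<Rightarrow> real mat" where
  "nccc_slap_mat G = nccc_deg_mat G + nccc_adj_mat G"

text \<open>Spectrum: the multiset of eigenvalues (with algebraic multiplicity), i.e. the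
  multiset of roots of the characteristic polynomial (which splits for real symmetric matrices).\<close>
definition spec :: "real mat \<Rightarrow> real multiset" where
  "spec A = (THE M. char_poly A = (\<Prod>a \<in># M. [:- a, 1:]))"

text \<open>Number of edges counted twice = sum of degrees = sum of adjacency entries.\<close>
definition nccc_avg_deg :: "('a, 'b) monoid_scheme \<Rightarrow> real" where
  "nccc_avg_deg G = (let A = nccc_adj_mat G in
     (\<Sum>i < dim_row A. \<Sum>j < dim_row A. A $$ (i, j)) / real (card (nccc_vertices G)))"

definition energy :: "('a, 'b) monoid_scheme \<Rightarrow> real" where
  "energy G = (\<Sum>l \<in># spec (nccc_adj_mat G). \<bar>l\<bar>)"

definition lap_energy :: "('a, 'b) monoid_scheme \<Rightarrow> real" where
  "lap_energy G = (\<Sum>\<beta> \<in># spec (nccc_lap_mat G). \<bar>\<beta> - nccc_avg_deg G\<bar>)"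

definition slap_energy :: "('a, 'b) monoid_scheme \<Rightarrow> real" where
  "slap_energy G = (\<Sum>\<gamma> \<in># spec (nccc_slap_mat G). \<bar>\<gamma> - nccc_avg_deg G\<bar>)"

end

theory Submission
  imports Defs "Jordan_Normal_Form.Schur_Decomposition"
begin


definition mtr :: "'a::comm_ring_1 mat \<Rightarrow> 'a" where
  "mtr M = (\<Sum>i\<in>{0..<dim_row M}. M $$ (i,i))"

lemma tr_comm:
  assumes "U \<in> carrier_mat n n" "W \<in> carrier_mat n n"
  shows "mtr (U*W) = mtr (W*U)"
proof -
  have "mtr (U*W) = (\<Sum>i\<in>{0..<n}. \<Sum>k\<in>{0..<n}. U$$(i,k) * W$$(k,i))"
    using assms by (simp add: mtr_def scalar_prod_def)
  also have "\<dots> = (\<Sum>k\<in>{0..<n}. \<Sum>i\<in>{0..<n}. W$$(k,i) * U$$(i,k))"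
    by (subst sum.swap) (simp add: mult.commute)
  also have "\<dots> = mtr (W*U)"
    using assms by (simp add: mtr_def scalar_prod_def)
  finally show ?thesis .
qed

lemma tr_similar:
  assumes "similar_mat_wit A B P Q"
  shows "mtr A = mtr B"
proof -
  define n where "n = dim_row A"
  from assms have c: "A \<in> carrier_mat n n" "B \<in> carrier_mat n n" "P \<in> carrier_mat n n" "Q \<in> carrier_mat n n"
    and QP: "Q * P = 1\<^sub>m n" and A: "A = P * B * Q"
    using similar_mat_witD[OF n_def assms] by auto
  have "mtr A = mtr ((P * B) * Q)" by (subst A) (rule refl)
  also have "\<dots> = mtr (Q * (P * B))" using c by (intro tr_comm[of _ n]) auto
  also have "Q * (P * B) = (Q * P) * B" using c by (simp add: assoc_mult_mat)
  also have "\<dots> = B" using c QP by simp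
  finally show ?thesis .
qed

lemma tr_upper:
  assumes B: "B \<in> carrier_mat n n" and ut: "upper_triangular B"
  shows "mtr B = sum_list (diag_mat B)"
    "mtr (B * B) = sum_list (map (\<lambda>x. x^2) (diag_mat B))"
proof -
  show "mtr B = sum_list (diag_mat B)"
    using B sum_set_upt_conv_sum_list_nat[of "\<lambda>i. B $$ (i,i)" 0 n] by (simp add: mtr_def diag_mat_def o_def)
  have d: "(B*B) $$ (i,i) = (B $$ (i,i))^2" if i: "i < n" for i
  proof -
    have "(B*B) $$ (i,i) = (\<Sum>k\<in>{0..<n}. B$$(i,k) * B$$(k,i))"
      using B i by (simp add: scalar_prod_def)
    also have "\<dots> = (\<Sum>k\<in>{0..<n}. if k = i then B$$(i,k) * B$$(k,i) else 0)"
    proof (rule sum.cong[OF refl])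
      fix k assume k: "k \<in> {0..<n}"
      show "B$$(i,k) * B$$(k,i) = (if k = i then B$$(i,k) * B$$(k,i) else 0)"
      proof (cases "k < i")
        case True then show ?thesis using ut B i by (auto dest: upper_triangularD)
      next
        case False then show ?thesis using ut B k by (auto dest!: upper_triangularD[of B i k])
      qed
    qed
    also have "\<dots> = (B $$ (i,i))^2" using i by (simp add: power2_eq_square)
    finally show ?thesis .
  qed
  have "mtr (B * B) = (\<Sum>i\<in>{0..<n}. (B*B) $$ (i,i))" using B by (simp add: mtr_def)
  also have "\<dots> = (\<Sum>i\<in>{0..<n}. (B $$ (i,i))^2)" using d by (intro sum.cong) auto
  also have "\<dots> = sum_list (map (\<lambda>i. (B $$ (i,i))^2) [0..<n])"
    by (rule sum_set_upt_conv_sum_list_nat[of _ 0 n, unfolded set_upt])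
  also have "\<dots> = sum_list (map (\<lambda>x. x^2) (diag_mat B))"
    using B by (simp add: diag_mat_def o_def)
  finally show "mtr (B * B) = sum_list (map (\<lambda>x. x^2) (diag_mat B))" .
qed


definition kmat :: "nat \<Rightarrow> (nat \<Rightarrow> 'x) \<Rightarrow> 'a::{zero,one} mat" where
  "kmat m c = mat m m (\<lambda>(i,j). if c i \<noteq> c j then 1 else 0)"

definition jmat :: "nat \<Rightarrow> 'a::{zero,one} mat" where
  "jmat m = mat m m (\<lambda>_. 1)"

lemma smult_mat_vec:
  assumes "A \<in> carrier_mat nr nc" "v \<in> carrier_vec nc"
  shows "(k \<cdot>\<^sub>m A) *\<^sub>v v = k \<cdot>\<^sub>v (A *\<^sub>v (v :: 'a::comm_ring_1 vec))"
  using assms by (intro eq_vecI) (auto simp: scalar_prod_def sum_distrib_left ac_simps)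


lemma shift_cp:
  fixes K :: "complex mat"
  assumes K: "K \<in> carrier_mat m m" and cp: "char_poly K = (\<Prod>a\<leftarrow>es. [:-a,1:])"
  shows "char_poly (s \<cdot>\<^sub>m 1\<^sub>m m + t \<cdot>\<^sub>m K) = (\<Prod>a\<leftarrow>es. [:-(s + t*a),1:])"
proof -
  obtain B P Q where sd: "schur_decomposition K es = (B,P,Q)" by (cases "schur_decomposition K es") auto
  from schur_decomposition[OF K cp sd] have sim: "similar_mat_wit K B P Q"
    and ut: "upper_triangular B" and dg: "diag_mat B = es" by auto
  from similar_mat_witD2[OF K sim] have PQ: "P * Q = 1\<^sub>m m" and QP: "Q * P = 1\<^sub>m m"
    and KB: "K = P * B * Q" and Bc: "B \<in> carrier_mat m m" and Pc: "P \<in> carrier_mat m m"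
    and Qc: "Q \<in> carrier_mat m m" by auto
  define B' where "B' = s \<cdot>\<^sub>m 1\<^sub>m m + t \<cdot>\<^sub>m B"
  have B'c: "B' \<in> carrier_mat m m" using Bc by (simp add: B'_def)
  have "P * B' = P * (s \<cdot>\<^sub>m 1\<^sub>m m) + P * (t \<cdot>\<^sub>m B)"
    unfolding B'_def using Pc Bc by (intro mult_add_distrib_mat) auto
  also have "\<dots> = s \<cdot>\<^sub>m (P * 1\<^sub>m m) + t \<cdot>\<^sub>m (P * B)"
    using mult_smult_distrib[OF Pc one_carrier_mat, of s] mult_smult_distrib[OF Pc Bc, of t] by simp
  also have "\<dots> = s \<cdot>\<^sub>m P + t \<cdot>\<^sub>m (P * B)" using Pc by simp
  finally have "P * B' * Q = (s \<cdot>\<^sub>m P + t \<cdot>\<^sub>m (P * B)) * Q" by simp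
  also have "\<dots> = (s \<cdot>\<^sub>m P) * Q + (t \<cdot>\<^sub>m (P * B)) * Q"
    using Pc Bc Qc by (intro add_mult_distrib_mat) auto
  also have "\<dots> = s \<cdot>\<^sub>m (P * Q) + t \<cdot>\<^sub>m (P * B * Q)"
    using mult_smult_assoc_mat[OF Pc Qc, of s] mult_smult_assoc_mat[OF mult_carrier_mat[OF Pc Bc] Qc, of t] by simp
  also have "\<dots> = s \<cdot>\<^sub>m 1\<^sub>m m + t \<cdot>\<^sub>m K" using PQ KB by simp
  finally have eq: "s \<cdot>\<^sub>m 1\<^sub>m m + t \<cdot>\<^sub>m K = P * B' * Q" by simp
  have "similar_mat (s \<cdot>\<^sub>m 1\<^sub>m m + t \<cdot>\<^sub>m K) B'"
    unfolding similar_mat_def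
    by (rule exI[of _ P], rule exI[of _ Q], rule similar_mat_witI[OF PQ QP eq _ B'c Pc Qc]) (use K in simp)
  then have "char_poly (s \<cdot>\<^sub>m 1\<^sub>m m + t \<cdot>\<^sub>m K) = char_poly B'" by (rule char_poly_similar)
  also have "\<dots> = (\<Prod>a\<leftarrow>diag_mat B'. [:-a,1:])"
  proof (rule char_poly_upper_triangular[OF B'c])
    show "upper_triangular B'" using ut Bc unfolding B'_def
      by (intro upper_triangularI) (auto dest: upper_triangularD)
  qed
  also have "diag_mat B' = map (\<lambda>a. s + t*a) es"
    using Bc dg unfolding B'_def diag_mat_def by auto
  finally show ?thesis by (simp add: o_def)
qed

lemma proots_lin: "proots (\<Prod>a\<in>#M. [:-a,1:]) = (M :: 'a::field multiset)"
proof (induction M)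
  case empty then show ?case by simp
next
  case (add x M)
  have nz: "(\<Prod>a\<in>#M. [:-a,1:]) \<noteq> (0 :: 'a poly)" by (auto simp: prod_mset_zero_iff)
  have "proots ([:-x,1:] * (\<Prod>a\<in>#M. [:-a,1:])) = proots [:-x,1:] + proots (\<Prod>a\<in>#M. [:-a,1:])"
    using nz by (intro proots_mult) auto
  then show ?case using add by simp
qed

lemma spec_eq:
  assumes "char_poly R = (\<Prod>a\<in>#M. [:-a,1:])"
  shows "spec R = M"
  unfolding spec_def
proof (rule the_equality)
  show "char_poly R = (\<Prod>a\<in>#M. [:-a,1:])" by fact
next
  fix N assume "char_poly R = (\<Prod>a\<in>#N. [:-a,1:])"
  then have "proots (\<Prod>a\<in>#N. [:-a,1:]) = proots (\<Prod>a\<in>#M. [:-a,1:])" using assms by simp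
  then show "N = M" by (simp add: proots_lin)
qed

lemma real_from_complex:
  fixes R :: "real mat"
  assumes Rc: "R \<in> carrier_mat m m"
    and cp: "char_poly (map_mat complex_of_real R) = (\<Prod>a\<leftarrow>es. [:-a,1:])"
    and ms: "mset es = image_mset complex_of_real M"
  shows "spec R = M"
proof -
  interpret h: map_poly_inj_comm_ring_hom "complex_of_real" ..
  have "(\<Prod>a\<leftarrow>es. [:-a,1:]) = (\<Prod>a\<in>#mset es. [:-a,1:])"
    by (metis mset_map prod_mset_prod_list)
  also have "\<dots> = (\<Prod>a\<in>#M. [:-complex_of_real a,1:])" unfolding ms by (simp add: image_mset.compositionality o_def)
  also have "\<dots> = map_poly complex_of_real (\<Prod>a\<in>#M. [:-a,1:])"
    by (simp add: h.hom_prod_mset image_mset.compositionality o_def)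
  finally have eq1: "(\<Prod>a\<leftarrow>es. [:-a,1:]) = map_poly complex_of_real (\<Prod>a\<in>#M. [:-a,1:])" .
  have "map_poly complex_of_real (char_poly R) = map_poly complex_of_real (\<Prod>a\<in>#M. [:-a,1:])"
    using cp of_real_hom.char_poly_hom[OF Rc] eq1 by metis
  then have "char_poly R = (\<Prod>a\<in>#M. [:-a,1:])" by (rule h.injectivity)
  then show ?thesis by (rule spec_eq)
qed

locale kp =
  fixes m n p :: nat and c :: "nat \<Rightarrow> 'x"
  assumes m: "m = (p+1)*n" and n: "n > 0" and p: "p > 0"
  and cnt: "\<And>i. i < m \<Longrightarrow> card {k\<in>{0..<m}. c k = c i} = n"
begin

lemma card1: assumes "i < m" shows "card {k\<in>{0..<m}. c k \<noteq> c i} = p*n"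
proof -
  have "{k\<in>{0..<m}. c k \<noteq> c i} = {0..<m} - {k\<in>{0..<m}. c k = c i}" by auto
  moreover have "card ({0..<m} - {k\<in>{0..<m}. c k = c i}) = card {0..<m} - card {k\<in>{0..<m}. c k = c i}"
    by (rule card_Diff_subset) auto
  ultimately have "card {k\<in>{0..<m}. c k \<noteq> c i} = m - n"
    using cnt[OF assms] by simp
  then show ?thesis using m by simp
qed

lemma card2: assumes "i < m" "j < m" "c i \<noteq> c j"
  shows "card {k\<in>{0..<m}. c k \<noteq> c i \<and> c k \<noteq> c j} = p*n - n"
proof -
  have "{k\<in>{0..<m}. c k \<noteq> c i \<and> c k \<noteq> c j} = {k\<in>{0..<m}. c k \<noteq> c i} - {k\<in>{0..<m}. c k = c j}" by auto
  moreover have "{k\<in>{0..<m}. c k = c j} \<subseteq> {k\<in>{0..<m}. c k \<noteq> c i}" using assms by auto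
  moreover have "card ({k\<in>{0..<m}. c k \<noteq> c i} - {k\<in>{0..<m}. c k = c j}) = card {k\<in>{0..<m}. c k \<noteq> c i} - card {k\<in>{0..<m}. c k = c j}"
    by (rule card_Diff_subset) (use assms in auto)
  ultimately show ?thesis using card1[OF assms(1)] cnt[OF assms(2)] by simp
qed

lemma sum_ind: "(\<Sum>k\<in>{0..<m}. if P k then (1::'a::comm_ring_1) else 0) = of_nat (card {k\<in>{0..<m}. P k})"
  by (simp add: sum.inter_filter[symmetric])

lemma kmat_carrier[simp]: "kmat m c \<in> carrier_mat m m" "jmat m \<in> carrier_mat m m"
  by (auto simp: kmat_def jmat_def)

lemma KK: "(kmat m c * kmat m c :: 'a::comm_ring_1 mat) = of_nat (p*n) \<cdot>\<^sub>m jmat m - of_nat n \<cdot>\<^sub>m kmat m c"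
proof (rule eq_matI)
  fix i j assume i: "i < dim_row (of_nat (p*n) \<cdot>\<^sub>m jmat m - of_nat n \<cdot>\<^sub>m (kmat m c :: 'a mat))"
    and j: "j < dim_col (of_nat (p*n) \<cdot>\<^sub>m jmat m - of_nat n \<cdot>\<^sub>m (kmat m c :: 'a mat))"
  then have i: "i < m" and j: "j < m" by (auto simp: jmat_def kmat_def)
  have "(kmat m c * kmat m c :: 'a mat) $$ (i,j) = (\<Sum>k\<in>{0..<m}. if c k \<noteq> c i \<and> c k \<noteq> c j then 1 else 0)"
    using i j by (auto simp: kmat_def scalar_prod_def intro!: sum.cong)
  also have "\<dots> = of_nat (card {k\<in>{0..<m}. c k \<noteq> c i \<and> c k \<noteq> c j})" by (rule sum_ind)
  also have "\<dots> = (of_nat (p*n) \<cdot>\<^sub>m jmat m - of_nat n \<cdot>\<^sub>m (kmat m c :: 'a mat)) $$ (i,j)"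
  proof (cases "c i = c j")
    case True
    then show ?thesis using i j card1[OF i] by (simp add: kmat_def jmat_def)
  next
    case False
    have "n \<le> p * n" using p by simp
    then show ?thesis using i j card2[OF i j False] False by (simp add: kmat_def jmat_def of_nat_diff)
  qed
  finally show "(kmat m c * kmat m c :: 'a mat) $$ (i,j) = (of_nat (p*n) \<cdot>\<^sub>m jmat m - of_nat n \<cdot>\<^sub>m (kmat m c :: 'a mat)) $$ (i,j)" .
qed (auto simp: kmat_def jmat_def)

lemma KJ: "(kmat m c * jmat m :: 'a::comm_ring_1 mat) = of_nat (p*n) \<cdot>\<^sub>m jmat m"
proof (rule eq_matI)
  fix i j assume i: "i < dim_row (of_nat (p*n) \<cdot>\<^sub>m (jmat m :: 'a mat))"
    and j: "j < dim_col (of_nat (p*n) \<cdot>\<^sub>m (jmat m :: 'a mat))"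
  then have i: "i < m" and j: "j < m" by (auto simp: jmat_def kmat_def)
  have "(kmat m c * jmat m :: 'a mat) $$ (i,j) = (\<Sum>k\<in>{0..<m}. if c k \<noteq> c i then 1 else 0)"
    using i j by (auto simp: kmat_def jmat_def scalar_prod_def intro!: sum.cong)
  also have "\<dots> = of_nat (card {k\<in>{0..<m}. c k \<noteq> c i})" by (rule sum_ind)
  finally show "(kmat m c * jmat m :: 'a mat) $$ (i,j) = (of_nat (p*n) \<cdot>\<^sub>m (jmat m :: 'a mat)) $$ (i,j)"
    using i j card1[OF i] by (simp add: jmat_def)
qed (auto simp: kmat_def jmat_def)


lemma eig:
  fixes e :: complex
  assumes ev: "eigenvector (kmat m c) v e"
  shows "e = 0 \<or> e = - of_nat n \<or> e = of_nat (p*n)"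
proof -
  define K where "K = (kmat m c :: complex mat)"
  define J where "J = (jmat m :: complex mat)"
  define a where "a = (of_nat (p*n) :: complex)"
  define b where "b = (of_nat n :: complex)"
  define w where "w = J *\<^sub>v v"
  have Kc: "K \<in> carrier_mat m m" and Jc: "J \<in> carrier_mat m m" by (auto simp: K_def J_def)
  from ev have v: "v \<in> carrier_vec m" and v0: "v \<noteq> 0\<^sub>v m" and Kv: "K *\<^sub>v v = e \<cdot>\<^sub>v v"
    unfolding eigenvector_def K_def by (auto simp: kmat_def)
  have w: "w \<in> carrier_vec m" using Jc v by (simp add: w_def)
  have "(K*K) *\<^sub>v v = K *\<^sub>v (K *\<^sub>v v)" using Kc v by simp
  also have "\<dots> = e \<cdot>\<^sub>v (e \<cdot>\<^sub>v v)" using Kv Kc v by (simp add: mult_mat_vec)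
  finally have h1: "(K*K) *\<^sub>v v = e \<cdot>\<^sub>v (e \<cdot>\<^sub>v v)" .
  have "(K*K) *\<^sub>v v = (a \<cdot>\<^sub>m J - b \<cdot>\<^sub>m K) *\<^sub>v v" unfolding K_def J_def a_def b_def KK[where 'a=complex] by (rule refl)
  also have "\<dots> = (a \<cdot>\<^sub>m J) *\<^sub>v v - (b \<cdot>\<^sub>m K) *\<^sub>v v"
    using Kc Jc v by (intro minus_mult_distrib_mat_vec) auto
  also have "\<dots> = a \<cdot>\<^sub>v w - b \<cdot>\<^sub>v (e \<cdot>\<^sub>v v)"
    using Kc Jc v Kv by (simp add: smult_mat_vec w_def)
  finally have h2: "(K*K) *\<^sub>v v = a \<cdot>\<^sub>v w - b \<cdot>\<^sub>v (e \<cdot>\<^sub>v v)" .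
  have E1: "a * w $ i = (e*e + b*e) * v $ i" if i: "i < m" for i
  proof -
    have "((K*K) *\<^sub>v v) $ i = ((K*K) *\<^sub>v v) $ i" by simp
    from arg_cong[OF h1, of "\<lambda>x. x $ i"] arg_cong[OF h2, of "\<lambda>x. x $ i"]
    have "a * w $ i - b * (e * v $ i) = e * (e * v $ i)" using i v w by simp
    then show ?thesis by (simp add: algebra_simps)
  qed
  have E1v: "a \<cdot>\<^sub>v w = (e*e + b*e) \<cdot>\<^sub>v v" using E1 v w by (intro eq_vecI) auto
  have "K *\<^sub>v w = (K * J) *\<^sub>v v" using Kc Jc v by (simp add: w_def)
  also have "\<dots> = (a \<cdot>\<^sub>m J) *\<^sub>v v" unfolding K_def J_def a_def KJ[where 'a=complex] by (rule refl)
  also have "\<dots> = a \<cdot>\<^sub>v w" using Jc v by (simp add: smult_mat_vec w_def)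
  finally have E2: "K *\<^sub>v w = a \<cdot>\<^sub>v w" .
  have "K *\<^sub>v (a \<cdot>\<^sub>v w) = a \<cdot>\<^sub>v (a \<cdot>\<^sub>v w)" using Kc w E2 by (simp add: mult_mat_vec)
  moreover have "K *\<^sub>v ((e*e + b*e) \<cdot>\<^sub>v v) = (e*e + b*e) \<cdot>\<^sub>v (e \<cdot>\<^sub>v v)" using Kc v Kv by (simp add: mult_mat_vec)
  ultimately have E3: "a \<cdot>\<^sub>v (a \<cdot>\<^sub>v w) = (e*e + b*e) \<cdot>\<^sub>v (e \<cdot>\<^sub>v v)" using E1v by simp
  obtain i where i: "i < m" and vi: "v $ i \<noteq> 0"
    using v v0 by (metis carrier_vecD eq_vecI index_zero_vec(1) index_zero_vec(2))
  have "a * (a * w $ i) = (e*e + b*e) * (e * v $ i)"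
    using arg_cong[OF E3, of "\<lambda>x. x $ i"] i v w by simp
  then have "a * ((e*e + b*e) * v $ i) = (e*e + b*e) * (e * v $ i)" using E1[OF i] by simp
  then have "(e * (e + b) * (a - e)) * v $ i = 0" by (simp add: algebra_simps)
  then have "e * (e + b) * (a - e) = 0" using vi by simp
  then have "e = 0 \<or> e = - b \<or> e = a" by (auto simp: add_eq_0_iff)
  then show ?thesis unfolding a_def b_def by auto
qed


lemma main_complex:
  obtains es where "char_poly (kmat m c :: complex mat) = (\<Prod>a\<leftarrow>es. [:-a,1:])"
    "mset es = replicate_mset ((p+1)*(n-1)) 0 + replicate_mset p (- of_nat n) + {#of_nat (p*n)#}"
proof -
  define K where "K = (kmat m c :: complex mat)"
  define a where "a = (of_nat (p*n) :: complex)"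
  define b where "b = (of_nat n :: complex)"
  have Kc: "K \<in> carrier_mat m m" by (simp add: K_def)
  obtain es where cp: "char_poly K = (\<Prod>a\<leftarrow>es. [:-a,1:])" and len: "length es = m"
    using char_poly_factorized[OF Kc] by blast
  have ev: "e = 0 \<or> e = - b \<or> e = a" if e: "e \<in> set es" for e
  proof -
    have "poly (char_poly K) e = 0" unfolding cp using e
      by (auto simp: poly_prod_list_zero_iff)
    then have "eigenvalue K e" using eigenvalue_root_char_poly[OF Kc] by simp
    then obtain v where "eigenvector K v e" unfolding eigenvalue_def by blast
    then show ?thesis using eig unfolding K_def a_def b_def by blast
  qed
  obtain B P Q where sd: "schur_decomposition K es = (B,P,Q)" by (cases "schur_decomposition K es") auto
  from schur_decomposition[OF Kc cp sd] have sim: "similar_mat_wit K B P Q"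
    and ut: "upper_triangular B" and dg: "diag_mat B = es" by auto
  from similar_mat_witD2[OF Kc sim] have Bc: "B \<in> carrier_mat m m" by auto
  have "mtr K = mtr B" by (rule tr_similar[OF sim])
  also have "\<dots> = sum_list es" using tr_upper(1)[OF Bc ut] dg by simp
  finally have S1': "sum_list es = mtr K" by simp
  have "mtr K = 0" unfolding mtr_def K_def kmat_def by simp
  with S1' have S1: "sum_list es = 0" by simp
  have sim2: "similar_mat_wit (K ^\<^sub>m 2) (B ^\<^sub>m 2) P Q" by (rule similar_mat_wit_pow[OF sim])
  have K2: "K ^\<^sub>m 2 = K * K" using Kc by (simp add: numeral_2_eq_2)
  have B2: "B ^\<^sub>m 2 = B * B" using Bc by (simp add: numeral_2_eq_2)
  have "mtr (K * K) = mtr (B * B)" using tr_similar[OF sim2] K2 B2 by simp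
  also have "\<dots> = sum_list (map (\<lambda>x. x^2) es)" using tr_upper(2)[OF Bc ut] dg by simp
  finally have S2': "sum_list (map (\<lambda>x. x^2) es) = mtr (K*K)" by simp
  have "mtr (K*K) = (\<Sum>i\<in>{0..<m}. a)"
    unfolding mtr_def K_def KK[where 'a=complex] a_def b_def by (simp add: kmat_def jmat_def)
  also have "\<dots> = of_nat m * a" by simp
  finally have S2: "sum_list (map (\<lambda>x. x^2) es) = of_nat m * a" using S2' by simp
  define M where "M = mset es"
  define x where "x = count M 0"
  define y where "y = count M (-b)"
  define w where "w = count M a"
  have nz0: "b \<noteq> 0" "a \<noteq> 0" using n p unfolding a_def b_def by auto
  have nz1: "-b \<noteq> a"
  proof
    assume "-b = a"
    then have "(of_nat (p*n + n) :: complex) = 0" unfolding a_def b_def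
      by (metis add.commute add_eq_0_iff of_nat_add)
    then have "p*n + n = 0" by (simp only: of_nat_eq_0_iff)
    with n show False by simp
  qed
  note nz = nz0 nz1
  have nz2: "(0::complex) \<noteq> - b" using nz by auto
  have Meq: "M = replicate_mset x 0 + replicate_mset y (-b) + replicate_mset w a"
  proof (rule multiset_eqI)
    fix z
    show "count M z = count (replicate_mset x 0 + replicate_mset y (-b) + replicate_mset w a) z"
    proof (cases "z = 0 \<or> z = -b \<or> z = a")
      case True
      then show ?thesis using nz nz2 unfolding x_def y_def w_def by auto
    next
      case False
      then have "z \<notin># M" using ev unfolding M_def by auto
      then show ?thesis using False by (auto simp: count_eq_zero_iff)
    qed
  qed
  have "sum_list es = sum_mset M" unfolding M_def by (simp add: sum_mset_sum_list)
  also have "\<dots> = of_nat y * (-b) + of_nat w * a" unfolding Meq by simp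
  finally have T1: "of_nat y * (-b) + of_nat w * a = 0" using S1 by simp
  have "sum_list (map (\<lambda>x. x^2) es) = sum_mset (image_mset (\<lambda>x. x^2) M)"
    unfolding M_def by (metis mset_map sum_mset_sum_list)
  also have "\<dots> = of_nat y * b^2 + of_nat w * a^2" unfolding Meq by simp
  finally have T2: "of_nat y * b^2 + of_nat w * a^2 = of_nat m * a" using S2 by simp
  have sz: "x + y + w = m" using len Meq unfolding M_def
    by (metis size_mset size_replicate_mset size_union)
  from T1 have "(of_nat (w*p*n) :: complex) = of_nat (y*n)" unfolding a_def b_def
    by (simp add: algebra_simps)
  then have "w*p*n = y*n" by (simp only: of_nat_eq_iff)
  then have yw: "y = w*p" using n by simp
  from T2 have "(of_nat (y*n*n + w*(p*n)*(p*n)) :: complex) = of_nat (m*(p*n))" unfolding a_def b_def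
    by (simp add: algebra_simps power2_eq_square)
  then have "y*n*n + w*(p*n)*(p*n) = m*(p*n)" by (simp only: of_nat_eq_iff)
  then have "w * (p*n*n*(p+1)) = 1 * (p*n*n*(p+1))" using yw m by (simp add: algebra_simps)
  moreover have "p*n*n*(p+1) > 0" using n p by simp
  ultimately have w1: "w = 1" by (metis mult_right_cancel neq0_conv)
  with yw have yp: "y = p" by simp
  from sz w1 yp m have "x = (p+1)*(n-1)" by (simp add: algebra_simps diff_mult_distrib2)
  then have "mset es = replicate_mset ((p+1)*(n-1)) 0 + replicate_mset p (- of_nat n) + {#of_nat (p*n)#}"
    using Meq w1 yp unfolding M_def a_def b_def by simp
  then show ?thesis using that cp unfolding K_def by blast
qed


lemma real_specs:
  shows "spec (kmat m c :: real mat) = replicate_mset ((p + 1) * (n - 1)) 0 + replicate_mset p (- real n) + {# real n * real p #}"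
    and "spec (real (p*n) \<cdot>\<^sub>m 1\<^sub>m m - kmat m c) = {# 0 #} + replicate_mset ((p + 1) * (n - 1)) (real n * real p)
           + replicate_mset p ((real p + 1) * real n)"
    and "spec (real (p*n) \<cdot>\<^sub>m 1\<^sub>m m + kmat m c) = replicate_mset ((p + 1) * (n - 1)) (real n * real p)
           + replicate_mset p (real n * (real p - 1)) + {# 2 * real n * real p #}"
proof -
  obtain es where cp: "char_poly (kmat m c :: complex mat) = (\<Prod>a\<leftarrow>es. [:-a,1:])"
    and ms: "mset es = replicate_mset ((p+1)*(n-1)) 0 + replicate_mset p (- of_nat n) + {#of_nat (p*n)#}"
    using main_complex by blast
  have Kc: "(kmat m c :: complex mat) \<in> carrier_mat m m" by simp
  have mK: "map_mat complex_of_real (kmat m c) = kmat m c" by (rule eq_matI) (auto simp: kmat_def)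
  show "spec (kmat m c :: real mat) = replicate_mset ((p + 1) * (n - 1)) 0 + replicate_mset p (- real n) + {# real n * real p #}"
    by (rule real_from_complex[of _ m es]) (use cp ms mK in auto)
  have mL: "map_mat complex_of_real (real (p*n) \<cdot>\<^sub>m 1\<^sub>m m - kmat m c) = of_nat (p*n) \<cdot>\<^sub>m 1\<^sub>m m + (-1) \<cdot>\<^sub>m kmat m c"
    by (rule eq_matI) (auto simp: kmat_def)
  have cpL: "char_poly (of_nat (p*n) \<cdot>\<^sub>m 1\<^sub>m m + (-1) \<cdot>\<^sub>m (kmat m c :: complex mat)) = (\<Prod>a\<leftarrow>map (\<lambda>a. of_nat (p*n) + (-1)*a) es. [:-a,1:])"
    using shift_cp[OF Kc cp] by (simp add: o_def)
  show "spec (real (p*n) \<cdot>\<^sub>m 1\<^sub>m m - kmat m c) = {# 0 #} + replicate_mset ((p + 1) * (n - 1)) (real n * real p)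
           + replicate_mset p ((real p + 1) * real n)"
  proof (rule real_from_complex[of _ m "map (\<lambda>a. of_nat (p*n) + (-1)*a) es"])
    show "char_poly (map_mat complex_of_real (real (p*n) \<cdot>\<^sub>m 1\<^sub>m m - kmat m c)) = (\<Prod>a\<leftarrow>map (\<lambda>a. of_nat (p*n) + (-1)*a) es. [:-a,1:])"
      unfolding mL by (rule cpL)
    show "mset (map (\<lambda>a. of_nat (p*n) + (-1)*a) es) = image_mset complex_of_real ({# 0 #} + replicate_mset ((p + 1) * (n - 1)) (real n * real p)
           + replicate_mset p ((real p + 1) * real n))"
      unfolding mset_map ms by (simp add: algebra_simps)
  qed (rule minus_carrier_mat add_carrier_mat, rule kmat_carrier)+
  have mQ: "map_mat complex_of_real (real (p*n) \<cdot>\<^sub>m 1\<^sub>m m + kmat m c) = of_nat (p*n) \<cdot>\<^sub>m 1\<^sub>m m + 1 \<cdot>\<^sub>m kmat m c"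
    by (rule eq_matI) (auto simp: kmat_def)
  have cpQ: "char_poly (of_nat (p*n) \<cdot>\<^sub>m 1\<^sub>m m + 1 \<cdot>\<^sub>m (kmat m c :: complex mat)) = (\<Prod>a\<leftarrow>map (\<lambda>a. of_nat (p*n) + 1*a) es. [:-a,1:])"
    using shift_cp[OF Kc cp] by (simp add: o_def)
  show "spec (real (p*n) \<cdot>\<^sub>m 1\<^sub>m m + kmat m c) = replicate_mset ((p + 1) * (n - 1)) (real n * real p)
           + replicate_mset p (real n * (real p - 1)) + {# 2 * real n * real p #}"
  proof (rule real_from_complex[of _ m "map (\<lambda>a. of_nat (p*n) + 1*a) es"])
    show "char_poly (map_mat complex_of_real (real (p*n) \<cdot>\<^sub>m 1\<^sub>m m + kmat m c)) = (\<Prod>a\<leftarrow>map (\<lambda>a. of_nat (p*n) + 1*a) es. [:-a,1:])"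
      unfolding mQ by (rule cpQ)
    show "mset (map (\<lambda>a. of_nat (p*n) + 1*a) es) = image_mset complex_of_real (replicate_mset ((p + 1) * (n - 1)) (real n * real p)
           + replicate_mset p (real n * (real p - 1)) + {# 2 * real n * real p #})"
      unfolding mset_map ms by (simp add: algebra_simps)
  qed (rule minus_carrier_mat add_carrier_mat, rule kmat_carrier)+
qed

end


lemma dvd_prime_sq:
  assumes "Factorial_Ring.prime (p::nat)" "d dvd p^2" shows "d = 1 \<or> d = p \<or> d = p^2"
proof -
  obtain i where i: "i \<le> 2" "d = p^i" using divides_primepow_nat[OF assms(1)] assms(2) by blast
  then have "i = 0 \<or> i = 1 \<or> i = 2" by arith
  then show ?thesis using i by auto
qed

lemma dvd_prime1: "Factorial_Ring.prime (p::nat) \<Longrightarrow> d dvd p \<Longrightarrow> d = 1 \<or> d = p"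
  using prime_nat_iff by blast

context group
begin

lemma card_subgroup_dvd:
  assumes "finite (carrier G)" "subgroup A G" "subgroup B G" "A \<subseteq> B"
  shows "card A dvd card B"
proof -
  interpret Bg: group "G\<lparr>carrier := B\<rparr>" by (rule subgroup.subgroup_is_group[OF assms(3) is_group])
  have "subgroup A (G\<lparr>carrier := B\<rparr>)" by (rule subgroup_incl[OF assms(2,3,4)])
  then have "card (rcosets\<^bsub>G\<lparr>carrier := B\<rparr>\<^esub> A) * card A = Coset.order (G\<lparr>carrier := B\<rparr>)"
    by (rule Bg.lagrange)
  then have "card (rcosets\<^bsub>G\<lparr>carrier := B\<rparr>\<^esub> A) * card A = card B" by (simp add: Coset.order_def)
  then show ?thesis by (metis dvd_triv_right)
qed

lemma grp_center_sub: "subgroup (grp_center G) G"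
proof (rule subgroupI)
  show "grp_center G \<subseteq> carrier G" by (auto simp: grp_center_def)
  show "grp_center G \<noteq> {}" using one_closed by (auto simp: grp_center_def)
  fix a b assume a: "a \<in> grp_center G" and b: "b \<in> grp_center G"
  then have ac: "a \<in> carrier G" and bc: "b \<in> carrier G" by (auto simp: grp_center_def)
  show "inv a \<in> grp_center G" unfolding grp_center_def
  proof (intro CollectI conjI ballI)
    show "inv a \<in> carrier G" using ac by simp
    fix g assume g: "g \<in> carrier G"
    have "a \<otimes> g = g \<otimes> a" using a g by (auto simp: grp_center_def)
    have "inv a \<otimes> g = inv a \<otimes> (g \<otimes> a) \<otimes> inv a" using ac g by (simp add: m_assoc)
    also have "\<dots> = inv a \<otimes> (a \<otimes> g) \<otimes> inv a" using \<open>a \<otimes> g = g \<otimes> a\<close> by simp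
    also have "\<dots> = g \<otimes> inv a" using ac g by (simp add: m_assoc[symmetric])
    finally show "inv a \<otimes> g = g \<otimes> inv a" .
  qed
  show "a \<otimes> b \<in> grp_center G" unfolding grp_center_def
  proof (intro CollectI conjI ballI)
    show "a \<otimes> b \<in> carrier G" using ac bc by simp
    fix g assume g: "g \<in> carrier G"
    have "a \<otimes> g = g \<otimes> a" "b \<otimes> g = g \<otimes> b" using a b g by (auto simp: grp_center_def)
    then show "a \<otimes> b \<otimes> g = g \<otimes> (a \<otimes> b)" using ac bc g by (metis m_assoc)
  qed
qed

lemma grp_center_normal: "grp_center G \<lhd> G"
  unfolding normal_inv_iff
proof (intro conjI ballI)
  show "subgroup (grp_center G) G" by (rule grp_center_sub)
  fix x h assume x: "x \<in> carrier G" and h: "h \<in> grp_center G"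
  then have hc: "h \<in> carrier G" and "h \<otimes> x = x \<otimes> h" by (auto simp: grp_center_def)
  then have "x \<otimes> h \<otimes> inv x = h" using x by (metis inv_solve_right m_closed)
  then show "x \<otimes> h \<otimes> inv x \<in> grp_center G" using h by simp
qed

end

lemma part_count:
  assumes fin: "finite S" and U: "\<Union>F = S" and cardA: "\<And>A. A \<in> F \<Longrightarrow> card A = k"
    and disj: "\<And>A B. A \<in> F \<Longrightarrow> B \<in> F \<Longrightarrow> A \<noteq> B \<Longrightarrow> A \<inter> B = {}"
  shows "card F * k = card S"
proof -
  have "F \<subseteq> Pow S" using U by auto
  then have finF: "finite F" using fin by (simp add: finite_subset)
  have "card S = card (\<Union>F)" using U by simp
  also have "\<dots> = sum card F"
  proof (rule card_Union_disjoint)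
    show "pairwise disjnt F" using disj unfolding pairwise_def disjnt_def by blast
    show "\<And>A. A \<in> F \<Longrightarrow> finite A" using U fin by (metis Union_upper finite_subset)
  qed
  also have "\<dots> = card F * k" using cardA by simp
  finally show ?thesis by simp
qed

locale cpg = group G for G :: "('a,'b) monoid_scheme" (structure) +
  fixes p :: nat
  assumes fin: "finite (carrier G)"
    and pr: "Factorial_Ring.prime p"
    and ordG: "card (carrier G) = p^2 * card (grp_center G)"
    and commz: "\<And>a b. a \<in> carrier G \<Longrightarrow> b \<in> carrier G \<Longrightarrow> \<exists>c\<in>grp_center G. a \<otimes> b = c \<otimes> (b \<otimes> a)"
begin

definition cent where "cent x = {g \<in> carrier G. g \<otimes> x = x \<otimes> g}"
definition lab where "lab K = {g \<in> carrier G. \<forall>k\<in>K. k \<otimes> g = g \<otimes> k}"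

lemma Zc: "grp_center G \<subseteq> carrier G" by (auto simp: grp_center_def)
lemma finZ: "finite (grp_center G)" using Zc fin finite_subset by blast
lemma zpos: "card (grp_center G) > 0"
proof -
  have "\<one> \<in> grp_center G" by (auto simp: grp_center_def)
  then show ?thesis using finZ card_gt_0_iff by blast
qed
lemma p2: "p \<ge> 2" using pr prime_ge_2_nat by blast

lemma Zcomm: "c \<in> grp_center G \<Longrightarrow> g \<in> carrier G \<Longrightarrow> c \<otimes> g = g \<otimes> c"
  by (auto simp: grp_center_def)

lemma comm_inv: assumes "a \<in> carrier G" "g \<in> carrier G" "a \<otimes> g = g \<otimes> a"
  shows "inv a \<otimes> g = g \<otimes> inv a"
proof -
  have "inv a \<otimes> g = inv a \<otimes> (g \<otimes> a) \<otimes> inv a" using assms(1,2) by (simp add: m_assoc)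
  also have "\<dots> = inv a \<otimes> (a \<otimes> g) \<otimes> inv a" using assms(3) by simp
  also have "\<dots> = g \<otimes> inv a" using assms(1,2) by (simp add: m_assoc[symmetric])
  finally show ?thesis .
qed

lemma cent_sub: assumes x: "x \<in> carrier G" shows "subgroup (cent x) G"
proof (rule subgroupI)
  show "cent x \<subseteq> carrier G" by (auto simp: cent_def)
  show "cent x \<noteq> {}" using x by (auto simp: cent_def)
  fix a b assume a: "a \<in> cent x" and b: "b \<in> cent x"
  then have ac: "a \<in> carrier G" and bc: "b \<in> carrier G" and ax: "a \<otimes> x = x \<otimes> a" and bx: "b \<otimes> x = x \<otimes> b"
    by (auto simp: cent_def)
  show "inv a \<in> cent x" using comm_inv[OF ac x ax] ac by (simp add: cent_def)
  have "a \<otimes> b \<otimes> x = x \<otimes> (a \<otimes> b)"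
  proof -
    have "a \<otimes> b \<otimes> x = a \<otimes> (x \<otimes> b)" using ac bc x bx by (simp add: m_assoc)
    also have "\<dots> = (x \<otimes> a) \<otimes> b" using ac bc x ax by (simp add: m_assoc[symmetric])
    finally show ?thesis using ac bc x by (simp add: m_assoc)
  qed
  then show "a \<otimes> b \<in> cent x" using ac bc by (simp add: cent_def)
qed

lemma Z_cent: "x \<in> carrier G \<Longrightarrow> grp_center G \<subseteq> cent x"
  by (auto simp: cent_def grp_center_def)

lemma x_cent: "x \<in> carrier G \<Longrightarrow> x \<in> cent x"
  by (auto simp: cent_def)

lemma cent_carrier: "cent x \<subseteq> carrier G" by (auto simp: cent_def)

lemma card_cent: assumes x: "x \<in> carrier G" "x \<notin> grp_center G"
  shows "card (cent x) = p * card (grp_center G)"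
proof -
  let ?z = "card (grp_center G)"
  have finC: "finite (cent x)" using fin cent_carrier finite_subset by blast
  have "?z dvd card (cent x)"
    by (rule card_subgroup_dvd[OF fin grp_center_sub cent_sub[OF x(1)] Z_cent[OF x(1)]])
  then obtain d where cd: "card (cent x) = ?z * d" by blast
  have "card (cent x) dvd card (carrier G)"
    by (rule card_subgroup_dvd[OF fin cent_sub[OF x(1)] subgroup_self cent_carrier])
  then have "?z * d dvd ?z * p^2" using cd ordG by (simp add: mult.commute)
  then have "d dvd p^2" using zpos by simp
  then have "d = 1 \<or> d = p \<or> d = p^2" by (rule dvd_prime_sq[OF pr])
  moreover have "d \<noteq> 1"
  proof
    assume "d = 1"
    then have "card (cent x) = card (grp_center G)" using cd by simp
    then have "grp_center G = cent x" using card_subset_eq[OF finC Z_cent[OF x(1)]] by simp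
    then show False using x x_cent by simp
  qed
  moreover have "d \<noteq> p^2"
  proof
    assume "d = p^2"
    then have "card (cent x) = card (carrier G)" using cd ordG by (simp add: mult.commute)
    then have "cent x = carrier G" using card_subset_eq[OF fin cent_carrier] by simp
    then have "\<forall>g\<in>carrier G. g \<otimes> x = x \<otimes> g" unfolding cent_def by blast
    then have "x \<in> grp_center G" using x unfolding grp_center_def by force
    then show False using x by simp
  qed
  ultimately have "d = p" by blast
  then show ?thesis using cd by simp
qed

lemma cent_eq: assumes x: "x \<in> carrier G" "x \<notin> grp_center G" and y: "y \<in> carrier G" "y \<notin> grp_center G"
  and xy: "x \<otimes> y = y \<otimes> x"
  shows "cent x = cent y"
proof -
  let ?z = "card (grp_center G)"
  define K where "K = cent x \<inter> cent y"
  have Ks: "subgroup K G" unfolding K_def by (rule subgroups_Inter_pair[OF cent_sub[OF x(1)] cent_sub[OF y(1)]])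
  have finC: "finite (cent x)" "finite (cent y)" using fin cent_carrier finite_subset by blast+
  have ZK: "grp_center G \<subseteq> K" unfolding K_def using Z_cent x y by blast
  have xK: "x \<in> K" unfolding K_def using x y xy by (auto simp: cent_def)
  have "?z dvd card K" by (rule card_subgroup_dvd[OF fin grp_center_sub Ks ZK])
  then obtain e where ce: "card K = ?z * e" by blast
  have KC: "K \<subseteq> cent x" "K \<subseteq> cent y" unfolding K_def by auto
  have "card K dvd card (cent x)" by (rule card_subgroup_dvd[OF fin Ks cent_sub[OF x(1)] KC(1)])
  then have "?z * e dvd ?z * p" using ce card_cent[OF x] by (simp add: mult.commute)
  then have "e dvd p" using zpos by simp
  then have "e = 1 \<or> e = p" by (rule dvd_prime1[OF pr])
  moreover have "e \<noteq> 1"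
  proof
    assume "e = 1"
    then have "card K = ?z" using ce by simp
    then have "grp_center G = K" using card_subset_eq[OF finite_subset[OF KC(1) finC(1)] ZK] by simp
    then show False using x xK by simp
  qed
  ultimately have "e = p" by blast
  then have c1: "card K = card (cent x)" "card K = card (cent y)"
    using ce card_cent[OF x] card_cent[OF y] by (simp_all add: mult.commute)
  have "K = cent x" using card_subset_eq[OF finC(1) KC(1)] c1(1) by simp
  moreover have "K = cent y" using card_subset_eq[OF finC(2) KC(2)] c1(2) by simp
  ultimately show ?thesis by simp
qed

lemma conj_form: assumes g: "g \<in> carrier G" and x: "x \<in> carrier G"
  shows "\<exists>c\<in>grp_center G. g \<otimes> x \<otimes> inv g = c \<otimes> x"
proof -
  obtain c where c: "c \<in> grp_center G" and eq: "g \<otimes> (x \<otimes> inv g) = c \<otimes> ((x \<otimes> inv g) \<otimes> g)"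
    using commz[OF g, of "x \<otimes> inv g"] g x by auto
  have "(x \<otimes> inv g) \<otimes> g = x" using g x by (simp add: m_assoc)
  then have "g \<otimes> x \<otimes> inv g = c \<otimes> x" using eq g x by (simp add: m_assoc)
  then show ?thesis using c by blast
qed

lemma cent_mult: assumes c: "c \<in> grp_center G" and x: "x \<in> carrier G"
  shows "cent (c \<otimes> x) = cent x"
proof -
  have cc: "c \<in> carrier G" using c Zc by blast
  have "g \<otimes> (c \<otimes> x) = (c \<otimes> x) \<otimes> g \<longleftrightarrow> g \<otimes> x = x \<otimes> g" if g: "g \<in> carrier G" for g
  proof -
    have "g \<otimes> (c \<otimes> x) = c \<otimes> (g \<otimes> x)" using g cc x Zcomm[OF c g] by (simp add: m_assoc[symmetric])
    moreover have "(c \<otimes> x) \<otimes> g = c \<otimes> (x \<otimes> g)" using g cc x by (simp add: m_assoc)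
    ultimately show ?thesis using g cc x by simp
  qed
  then show ?thesis unfolding cent_def by auto
qed


lemma class_carrier: "x \<in> carrier G \<Longrightarrow> conj_class G x \<subseteq> carrier G"
  by (auto simp: conj_class_def)

lemma class_mem: "x \<in> carrier G \<Longrightarrow> x \<in> conj_class G x"
  unfolding conj_class_def by (rule CollectI, rule exI[of _ \<one>]) auto

lemma class_form: assumes x: "x \<in> carrier G" and y: "y \<in> conj_class G x"
  shows "\<exists>c\<in>grp_center G. y = c \<otimes> x"
  using y conj_form[OF _ x] unfolding conj_class_def by auto

lemma class_nonZ: assumes x: "x \<in> carrier G" "x \<notin> grp_center G" and y: "y \<in> conj_class G x"
  shows "y \<in> carrier G" "y \<notin> grp_center G"
proof -
  show yc: "y \<in> carrier G" using class_carrier[OF x(1)] y by blast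
  obtain c where c: "c \<in> grp_center G" and yc': "y = c \<otimes> x" using class_form[OF x(1) y] by blast
  have cc: "c \<in> carrier G" using c Zc by blast
  show "y \<notin> grp_center G"
  proof
    assume "y \<in> grp_center G"
    then have "inv c \<otimes> y \<in> grp_center G" using c grp_center_sub by (simp add: subgroup.m_inv_closed subgroup.m_closed)
    moreover have "inv c \<otimes> y = x" using yc' cc x by (simp add: m_assoc[symmetric])
    ultimately show False using x by simp
  qed
qed

lemma class_cent: assumes x: "x \<in> carrier G" and y: "y \<in> conj_class G x"
  shows "cent y = cent x"
  using class_form[OF x y] cent_mult x by auto

lemma class_eq: assumes x: "x \<in> carrier G" and y: "y \<in> conj_class G x"
  shows "conj_class G y = conj_class G x"
proof -
  obtain g where g: "g \<in> carrier G" and yg: "y = g \<otimes> x \<otimes> inv g" using y unfolding conj_class_def by blast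
  have sub: "conj_class G (g \<otimes> x \<otimes> inv g) \<subseteq> conj_class G x" if g: "g \<in> carrier G" and x: "x \<in> carrier G" for g x
  proof
    fix w assume "w \<in> conj_class G (g \<otimes> x \<otimes> inv g)"
    then obtain k where k: "k \<in> carrier G" and w: "w = k \<otimes> (g \<otimes> x \<otimes> inv g) \<otimes> inv k"
      unfolding conj_class_def by blast
    have "w = (k \<otimes> g) \<otimes> x \<otimes> inv (k \<otimes> g)" using w k g x by (simp add: m_assoc inv_mult_group)
    then show "w \<in> conj_class G x" using k g unfolding conj_class_def by blast
  qed
  have "conj_class G y \<subseteq> conj_class G x" using sub[OF g x] yg by simp
  moreover have "conj_class G x \<subseteq> conj_class G y"
  proof -
    have "inv g \<otimes> y \<otimes> inv (inv g) = inv g \<otimes> (g \<otimes> x \<otimes> inv g) \<otimes> g" using yg g by simp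
    also have "\<dots> = inv g \<otimes> (g \<otimes> x) \<otimes> (inv g \<otimes> g)" using g x by (simp add: m_assoc)
    also have "\<dots> = x" using g x by (simp add: m_assoc[symmetric])
    finally have e: "inv g \<otimes> y \<otimes> inv (inv g) = x" .
    have yc: "y \<in> carrier G" using yg g x by simp
    show ?thesis using sub[of "inv g" y] g yc unfolding e by simp
  qed
  ultimately show ?thesis by blast
qed

lemma class_card: assumes x: "x \<in> carrier G" "x \<notin> grp_center G"
  shows "card (conj_class G x) = p"
proof -
  interpret A: group_action G "carrier G" "\<lambda>g. (\<lambda>h \<in> carrier G. g \<otimes> h \<otimes> inv g)"
    by (rule action_by_conjugation)
  have orb: "orbit G (\<lambda>g. (\<lambda>h \<in> carrier G. g \<otimes> h \<otimes> inv g)) x = conj_class G x"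
    using x unfolding orbit_def conj_class_def by auto
  have "stabilizer G (\<lambda>g. (\<lambda>h \<in> carrier G. g \<otimes> h \<otimes> inv g)) x = {g \<in> carrier G. g \<otimes> x \<otimes> inv g = x}"
    using x unfolding stabilizer_def by auto
  also have "\<dots> = cent x" unfolding cent_def
  proof (intro Collect_cong conj_cong refl)
    fix g assume g: "g \<in> carrier G"
    show "(g \<otimes> x \<otimes> inv g = x) = (g \<otimes> x = x \<otimes> g)"
      using inv_solve_right'[of x "g \<otimes> x" g] g x by auto
  qed
  finally have stab: "stabilizer G (\<lambda>g. (\<lambda>h \<in> carrier G. g \<otimes> h \<otimes> inv g)) x = cent x" .
  have "card (conj_class G x) * card (cent x) = Coset.order G"
    using A.orbit_stabilizer_theorem[OF x(1)] orb stab by simp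
  then have "card (conj_class G x) * (p * card (grp_center G)) = p * (p * card (grp_center G))"
    using card_cent[OF x] ordG unfolding Coset.order_def by (simp add: power2_eq_square mult.assoc)
  moreover have "p * card (grp_center G) > 0" using zpos p2 by simp
  ultimately show ?thesis by simp
qed

lemma lab_class: assumes x: "x \<in> carrier G" shows "lab (conj_class G x) = cent x"
proof
  show "lab (conj_class G x) \<subseteq> cent x"
    using class_mem[OF x] unfolding lab_def cent_def by auto
  show "cent x \<subseteq> lab (conj_class G x)"
  proof
    fix g assume g: "g \<in> cent x"
    have "k \<otimes> g = g \<otimes> k" if k: "k \<in> conj_class G x" for k
    proof -
      have "g \<in> cent k" using g class_cent[OF x k] by simp
      then show ?thesis unfolding cent_def by simp
    qed
    then show "g \<in> lab (conj_class G x)" using g unfolding lab_def cent_def by auto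
  qed
qed

lemma adj_iff: assumes V: "V \<in> nccc_vertices G" and W: "W \<in> nccc_vertices G"
  shows "nccc_adj G V W \<longleftrightarrow> lab V \<noteq> lab W"
proof -
  obtain x where x: "x \<in> carrier G" "x \<notin> grp_center G" and Vx: "V = conj_class G x"
    using V unfolding nccc_vertices_def by blast
  obtain y where y: "y \<in> carrier G" "y \<notin> grp_center G" and Wy: "W = conj_class G y"
    using W unfolding nccc_vertices_def by blast
  show ?thesis
  proof
    assume adj: "nccc_adj G V W"
    show "lab V \<noteq> lab W"
    proof
      assume "lab V = lab W"
      then have "cent x = cent y" using Vx Wy lab_class x y by simp
      then have "y \<otimes> x = x \<otimes> y" using x_cent[OF y(1)] unfolding cent_def by blast
      then show False using adj class_mem[OF x(1)] class_mem[OF y(1)] Vx Wy unfolding nccc_adj_def by metis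
    qed
  next
    assume ne: "lab V \<noteq> lab W"
    then have cne: "cent x \<noteq> cent y" using Vx Wy lab_class x y by simp
    have "V \<noteq> W" using ne by auto
    moreover have "x' \<otimes> y' \<noteq> y' \<otimes> x'" if x': "x' \<in> V" and y': "y' \<in> W" for x' y'
    proof
      assume eq: "x' \<otimes> y' = y' \<otimes> x'"
      have a: "x' \<in> carrier G" "x' \<notin> grp_center G" using class_nonZ[OF x] x' Vx by auto
      have b: "y' \<in> carrier G" "y' \<notin> grp_center G" using class_nonZ[OF y] y' Wy by auto
      have "cent x' = cent y'" by (rule cent_eq[OF a b eq])
      then show False using cne class_cent[OF x(1)] class_cent[OF y(1)] x' y' Vx Wy by simp
    qed
    ultimately show "nccc_adj G V W" unfolding nccc_adj_def by blast
  qed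
qed

lemma finV: "finite (nccc_vertices G)"
  unfolding nccc_vertices_def using fin by simp

lemma class_disj: assumes x: "x \<in> carrier G" and y: "y \<in> carrier G"
  and ne: "conj_class G x \<noteq> conj_class G y"
  shows "conj_class G x \<inter> conj_class G y = {}"
proof (rule ccontr)
  assume "conj_class G x \<inter> conj_class G y \<noteq> {}"
  then obtain w where "w \<in> conj_class G x" "w \<in> conj_class G y" by blast
  then have "conj_class G w = conj_class G x" "conj_class G w = conj_class G y"
    using class_eq[OF x] class_eq[OF y] by blast+
  then show False using ne by simp
qed

lemma countV: "card (nccc_vertices G) * p = card (carrier G - grp_center G)"
proof (rule part_count)
  show "finite (carrier G - grp_center G)" using fin by simp
  show "\<Union>(nccc_vertices G) = carrier G - grp_center G"
  proof
    show "\<Union>(nccc_vertices G) \<subseteq> carrier G - grp_center G"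
      unfolding nccc_vertices_def using class_nonZ by blast
    show "carrier G - grp_center G \<subseteq> \<Union>(nccc_vertices G)"
      unfolding nccc_vertices_def using class_mem by blast
  qed
  show "\<And>A. A \<in> nccc_vertices G \<Longrightarrow> card A = p"
    unfolding nccc_vertices_def using class_card by blast
  show "\<And>A B. A \<in> nccc_vertices G \<Longrightarrow> B \<in> nccc_vertices G \<Longrightarrow> A \<noteq> B \<Longrightarrow> A \<inter> B = {}"
    unfolding nccc_vertices_def using class_disj by blast
qed

lemma countL: assumes x: "x \<in> carrier G" "x \<notin> grp_center G"
  shows "card {V \<in> nccc_vertices G. lab V = cent x} * p = card (cent x - grp_center G)"
proof -
  have eqF: "{V \<in> nccc_vertices G. lab V = cent x} = conj_class G ` (cent x - grp_center G)"
  proof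
    show "{V \<in> nccc_vertices G. lab V = cent x} \<subseteq> conj_class G ` (cent x - grp_center G)"
    proof
      fix V assume "V \<in> {V \<in> nccc_vertices G. lab V = cent x}"
      then obtain y where y: "y \<in> carrier G" "y \<notin> grp_center G" and Vy: "V = conj_class G y"
        and l: "lab V = cent x" unfolding nccc_vertices_def by blast
      then have "cent y = cent x" using lab_class by simp
      then have "y \<in> cent x" using x_cent[OF y(1)] by simp
      then show "V \<in> conj_class G ` (cent x - grp_center G)" using Vy y by blast
    qed
    show "conj_class G ` (cent x - grp_center G) \<subseteq> {V \<in> nccc_vertices G. lab V = cent x}"
    proof
      fix V assume "V \<in> conj_class G ` (cent x - grp_center G)"
      then obtain y where y: "y \<in> cent x" "y \<notin> grp_center G" and Vy: "V = conj_class G y" by blast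
      have yc: "y \<in> carrier G" using y cent_carrier by blast
      have "y \<otimes> x = x \<otimes> y" using y unfolding cent_def by blast
      then have "cent y = cent x" using cent_eq[OF x yc y(2)] by simp
      then have "lab V = cent x" using Vy lab_class[OF yc] by simp
      moreover have "V \<in> nccc_vertices G" using Vy yc y unfolding nccc_vertices_def by blast
      ultimately show "V \<in> {V \<in> nccc_vertices G. lab V = cent x}" by blast
    qed
  qed
  show ?thesis unfolding eqF
  proof (rule part_count)
    show "finite (cent x - grp_center G)" using fin cent_carrier finite_subset by blast
    show "\<Union>(conj_class G ` (cent x - grp_center G)) = cent x - grp_center G"
    proof
      show "\<Union>(conj_class G ` (cent x - grp_center G)) \<subseteq> cent x - grp_center G"
      proof
        fix w assume "w \<in> \<Union>(conj_class G ` (cent x - grp_center G))"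
        then obtain y where y: "y \<in> cent x" "y \<notin> grp_center G" and w: "w \<in> conj_class G y" by blast
        have yc: "y \<in> carrier G" using y cent_carrier by blast
        obtain c where c: "c \<in> grp_center G" and wc: "w = c \<otimes> y" using class_form[OF yc w] by blast
        have "c \<in> cent x" using c Z_cent[OF x(1)] by blast
        then have "w \<in> cent x" using wc y(1) subgroup.m_closed[OF cent_sub[OF x(1)]] by simp
        moreover have "w \<notin> grp_center G" using class_nonZ[OF yc y(2) w] by simp
        ultimately show "w \<in> cent x - grp_center G" by blast
      qed
      show "cent x - grp_center G \<subseteq> \<Union>(conj_class G ` (cent x - grp_center G))"
        using class_mem cent_carrier by blast
    qed
    show "\<And>A. A \<in> conj_class G ` (cent x - grp_center G) \<Longrightarrow> card A = p"
      using class_card cent_carrier by blast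
    show "\<And>A B. A \<in> conj_class G ` (cent x - grp_center G) \<Longrightarrow> B \<in> conj_class G ` (cent x - grp_center G) \<Longrightarrow> A \<noteq> B \<Longrightarrow> A \<inter> B = {}"
      using class_disj cent_carrier by blast
  qed
qed

end


lemma iso_facts:
  fixes G :: "('a,'b) monoid_scheme" (structure)
  assumes grp: "group G" and fin: "finite (carrier G)" and pne: "p > 0"
    and iso: "G Mod (grp_center G) \<cong> (integer_mod_group p \<times>\<times> integer_mod_group p)"
    and nrm: "grp_center G \<lhd> G" and sg: "subgroup (grp_center G) G"
  shows "card (carrier G) = p^2 * card (grp_center G)"
    and "\<And>a b. a \<in> carrier G \<Longrightarrow> b \<in> carrier G \<Longrightarrow> \<exists>c\<in>grp_center G. a \<otimes>\<^bsub>G\<^esub> b = c \<otimes>\<^bsub>G\<^esub> (b \<otimes>\<^bsub>G\<^esub> a)"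
proof -
  interpret group G by (rule grp)
  interpret N: normal "grp_center G" G by (rule nrm)
  let ?Z = "grp_center G"
  let ?H = "integer_mod_group p \<times>\<times> integer_mod_group p"
  have cH: "carrier ?H = {0..<int p} \<times> {0..<int p}"
    using pne by (simp add: DirProd_def carrier_integer_mod_group)
  have "card (carrier (G Mod ?Z)) = card (carrier ?H)" by (rule iso_same_card[OF iso])
  also have "\<dots> = p * p" using cH by (simp add: card_cartesian_product)
  finally have "card (rcosets ?Z) = p * p" by (simp add: FactGroup_def)
  moreover have "card (rcosets ?Z) * card ?Z = Coset.order G" by (rule lagrange[OF sg])
  ultimately show "card (carrier G) = p^2 * card ?Z" by (simp add: Coset.order_def power2_eq_square)
  obtain h where h: "h \<in> iso (G Mod ?Z) ?H" using iso unfolding is_iso_def by blast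
  then have hh: "h \<in> hom (G Mod ?Z) ?H" and hb: "bij_betw h (carrier (G Mod ?Z)) (carrier ?H)"
    unfolding iso_def by auto
  have Hcomm: "u \<otimes>\<^bsub>?H\<^esub> v = v \<otimes>\<^bsub>?H\<^esub> u" for u v
    by (cases u; cases v) (simp add: DirProd_def add.commute)
  fix a b assume a: "a \<in> carrier G" and b: "b \<in> carrier G"
  have Xa: "?Z #> a \<in> carrier (G Mod ?Z)" and Xb: "?Z #> b \<in> carrier (G Mod ?Z)"
    using a b by (simp_all add: FactGroup_def rcosetsI[OF subgroup.subset[OF sg]])
  have ab: "?Z #> (a \<otimes> b) \<in> carrier (G Mod ?Z)" and ba: "?Z #> (b \<otimes> a) \<in> carrier (G Mod ?Z)"
    using a b by (simp_all add: FactGroup_def rcosetsI[OF subgroup.subset[OF sg]])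
  have m1: "?Z #> (a \<otimes> b) = (?Z #> a) \<otimes>\<^bsub>G Mod ?Z\<^esub> (?Z #> b)"
    using N.rcos_sum[OF a b] by (simp add: FactGroup_def)
  have m2: "?Z #> (b \<otimes> a) = (?Z #> b) \<otimes>\<^bsub>G Mod ?Z\<^esub> (?Z #> a)"
    using N.rcos_sum[OF b a] by (simp add: FactGroup_def)
  have "h (?Z #> (a \<otimes> b)) = h (?Z #> a) \<otimes>\<^bsub>?H\<^esub> h (?Z #> b)"
    unfolding m1 by (rule hom_mult[OF hh Xa Xb])
  also have "\<dots> = h (?Z #> b) \<otimes>\<^bsub>?H\<^esub> h (?Z #> a)" by (rule Hcomm)
  also have "\<dots> = h (?Z #> (b \<otimes> a))"
    unfolding m2 by (rule hom_mult[OF hh Xb Xa, symmetric])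
  finally have "?Z #> (a \<otimes> b) = ?Z #> (b \<otimes> a)"
    using hb ab ba unfolding bij_betw_def inj_on_def by blast
  moreover have "a \<otimes> b \<in> ?Z #> (a \<otimes> b)" using a b by (simp add: rcos_self[OF _ sg])
  ultimately have "a \<otimes> b \<in> ?Z #> (b \<otimes> a)" by simp
  then show "\<exists>c\<in>?Z. a \<otimes> b = c \<otimes> (b \<otimes> a)" unfolding r_coset_def by blast
qed


theorem theorem2p3:
  fixes G :: "('a, 'b) monoid_scheme" and p z n :: nat
  assumes "group G" and "finite (carrier G)"
    and "\<not> comm_group G"
    and "Factorial_Ring.prime p"
    and "G Mod (grp_center G) \<cong> (integer_mod_group p \<times>\<times> integer_mod_group p)"
    and "z = card (grp_center G)"
    and "n = (p - 1) * z div p"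
  shows "spec (nccc_adj_mat G) =
           replicate_mset ((p + 1) * (n - 1)) 0 + replicate_mset p (- real n)
           + {# real n * real p #} \<and>
         spec (nccc_lap_mat G) =
           {# 0 #} + replicate_mset ((p + 1) * (n - 1)) (real n * real p)
           + replicate_mset p ((real p + 1) * real n) \<and>
         spec (nccc_slap_mat G) =
           replicate_mset ((p + 1) * (n - 1)) (real n * real p)
           + replicate_mset p (real n * (real p - 1)) + {# 2 * real n * real p #} \<and>
         energy G = 2 * real n * real p \<and>
         lap_energy G = 2 * real n * real p \<and>
         slap_energy G = 2 * real n * real p"
proof -
  note grp = assms(1) and fin = assms(2) and nab = assms(3) and pr = assms(4) and iso = assms(5)
    and zdef = assms(6) and ndef = assms(7)
  interpret group G by (rule grp)
  have sg: "subgroup (grp_center G) G" by (rule grp_center_sub)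
  have nrm: "grp_center G \<lhd> G" by (rule grp_center_normal)
  have p2: "p \<ge> 2" using pr prime_ge_2_nat by blast
  then have ppos: "p > 0" by simp
  note IF = iso_facts[OF grp fin ppos iso nrm sg]
  interpret C: cpg G p
    by unfold_locales (use fin pr IF in auto)
  obtain x0 where x0: "x0 \<in> carrier G" "x0 \<notin> grp_center G"
  proof (rule ccontr)
    assume "\<not> thesis"
    with that have "\<forall>x\<in>carrier G. x \<in> grp_center G" by blast
    then have "comm_group G"
      by (intro group_comm_groupI) (auto simp: grp_center_def)
    with nab show False by simp
  qed
  have zpos: "z > 0" using C.zpos zdef by simp
  define nn where "nn = card {V \<in> nccc_vertices G. C.lab V = C.cent x0}"
  have cdiff: "card (C.cent x - grp_center G) = p * z - z" if x: "x \<in> carrier G" "x \<notin> grp_center G" for x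
  proof -
    have "card (C.cent x - grp_center G) = card (C.cent x) - card (grp_center G)"
      using C.Z_cent[OF x(1)] C.finZ by (simp add: card_Diff_subset)
    then show ?thesis using C.card_cent[OF x] zdef by simp
  qed
  have cntx: "card {V \<in> nccc_vertices G. C.lab V = C.cent x} * p = (p - 1) * z" if x: "x \<in> carrier G" "x \<notin> grp_center G" for x
    using C.countL[OF x] cdiff[OF x] by (simp add: diff_mult_distrib)
  have nn: "nn * p = (p - 1) * z" using cntx[OF x0] unfolding nn_def .
  have n_nn: "n = nn" using nn ndef ppos by (metis nonzero_mult_div_cancel_right not_gr0)
  have npos: "n > 0"
  proof -
    have "(p - 1) * z > 0" using p2 zpos by simp
    then show ?thesis using nn n_nn by (metis mult_is_0 not_gr0)
  qed
  have cnt: "card {V \<in> nccc_vertices G. C.lab V = C.cent x} = n" if x: "x \<in> carrier G" "x \<notin> grp_center G" for x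
    using cntx[OF x] nn n_nn ppos by (metis mult_right_cancel not_gr0)
  define m where "m = card (nccc_vertices G)"
  have "card (carrier G - grp_center G) = card (carrier G) - z"
    using C.Zc C.finZ zdef by (simp add: card_Diff_subset)
  then have "m * p = p^2 * z - z" using C.countV IF(1) zdef unfolding m_def by simp
  also have "\<dots> = (p^2 - 1) * z" by (simp add: diff_mult_distrib)
  also have "p^2 - 1 = (p + 1) * (p - 1)" using p2 by (cases p) (auto simp: power2_eq_square)
  also have "(p + 1) * (p - 1) * z = (p + 1) * ((p - 1) * z)" by (rule mult.assoc)
  also have "(p - 1) * z = n * p" using nn n_nn by simp
  also have "(p + 1) * (n * p) = ((p + 1) * n) * p" by (rule mult.assoc[symmetric])
  finally have mval: "m = (p + 1) * n" using ppos by simp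
  define vs where "vs = nccc_vlist G"
  have "\<exists>xs. distinct xs \<and> set xs = nccc_vertices G" using finite_distinct_list[OF C.finV] by blast
  then have vs: "distinct vs" "set vs = nccc_vertices G"
    unfolding vs_def nccc_vlist_def by (metis (mono_tags, lifting) someI_ex)+
  have lenvs: "length vs = m" unfolding m_def using vs distinct_card by metis
  define c where "c = (\<lambda>i. C.lab (vs ! i))"
  have vsV: "vs ! i \<in> nccc_vertices G" if "i < m" for i using that vs lenvs by (metis nth_mem)
  have cntc: "card {k \<in> {0..<m}. c k = c i} = n" if i: "i < m" for i
  proof -
    obtain x where x: "x \<in> carrier G" "x \<notin> grp_center G" and vx: "vs ! i = conj_class G x"
      using vsV[OF i] unfolding nccc_vertices_def by blast
    have ci: "c i = C.cent x" unfolding c_def vx using C.lab_class[OF x(1)] .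
    have inj: "inj_on (nth vs) {k \<in> {0..<m}. c k = c i}"
      using vs(1) lenvs by (intro inj_on_nth) auto
    have img: "nth vs ` {k \<in> {0..<m}. c k = c i} = {V \<in> nccc_vertices G. C.lab V = C.cent x}"
    proof
      show "nth vs ` {k \<in> {0..<m}. c k = c i} \<subseteq> {V \<in> nccc_vertices G. C.lab V = C.cent x}"
        using vsV ci unfolding c_def by auto
      show "{V \<in> nccc_vertices G. C.lab V = C.cent x} \<subseteq> nth vs ` {k \<in> {0..<m}. c k = c i}"
      proof
        fix V assume V: "V \<in> {V \<in> nccc_vertices G. C.lab V = C.cent x}"
        then obtain k where k: "k < m" "vs ! k = V" using vs(2) lenvs by (metis (no_types, lifting) in_set_conv_nth mem_Collect_eq)
        then show "V \<in> nth vs ` {k \<in> {0..<m}. c k = c i}" using V ci unfolding c_def by auto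
      qed
    qed
    have "card {k \<in> {0..<m}. c k = c i} = card {V \<in> nccc_vertices G. C.lab V = C.cent x}"
      using card_image[OF inj] img by simp
    then show ?thesis using cnt[OF x] by simp
  qed
  interpret K: kp m n p c
    by unfold_locales (use mval npos ppos cntc in auto)
  have adjc: "nccc_adj G (vs ! i) (vs ! j) \<longleftrightarrow> c i \<noteq> c j" if "i < m" "j < m" for i j
    unfolding c_def using C.adj_iff[OF vsV vsV] that by blast
  have A: "nccc_adj_mat G = kmat m c"
    unfolding nccc_adj_mat_def Let_def vs_def[symmetric] lenvs kmat_def
    by (rule eq_matI) (auto simp: adjc)
  have rowsum: "(\<Sum>k<m. (kmat m c :: real mat) $$ (i, k)) = real (p*n)" if i: "i < m" for i
  proof -
    have "(\<Sum>k<m. (kmat m c :: real mat) $$ (i, k)) = (\<Sum>k\<in>{0..<m}. if c k \<noteq> c i then 1 else 0)"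
      using i by (auto simp: kmat_def lessThan_atLeast0 intro!: sum.cong)
    also have "\<dots> = real (card {k\<in>{0..<m}. c k \<noteq> c i})" by (rule K.sum_ind)
    also have "\<dots> = real (p*n)" using K.card1[OF i] by simp
    finally show ?thesis .
  qed
  have dimK: "dim_row (kmat m c :: real mat) = m" "dim_col (kmat m c :: real mat) = m" by (simp_all add: kmat_def)
  have D: "nccc_deg_mat G = real (p*n) \<cdot>\<^sub>m 1\<^sub>m m"
    unfolding nccc_deg_mat_def Let_def A dimK
    by (rule eq_matI) (simp_all add: rowsum)
  have L: "nccc_lap_mat G = real (p*n) \<cdot>\<^sub>m 1\<^sub>m m - kmat m c"
    unfolding nccc_lap_mat_def D A ..
  have Q: "nccc_slap_mat G = real (p*n) \<cdot>\<^sub>m 1\<^sub>m m + kmat m c"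
    unfolding nccc_slap_mat_def D A ..
  have sA: "spec (nccc_adj_mat G) = replicate_mset ((p + 1) * (n - 1)) 0 + replicate_mset p (- real n) + {# real n * real p #}"
    unfolding A by (rule K.real_specs(1))
  have sL: "spec (nccc_lap_mat G) = {# 0 #} + replicate_mset ((p + 1) * (n - 1)) (real n * real p)
           + replicate_mset p ((real p + 1) * real n)"
    unfolding L by (rule K.real_specs(2))
  have sQ: "spec (nccc_slap_mat G) = replicate_mset ((p + 1) * (n - 1)) (real n * real p)
           + replicate_mset p (real n * (real p - 1)) + {# 2 * real n * real p #}"
    unfolding Q by (rule K.real_specs(3))
  have mpos: "m > 0" using mval npos by simp
  have avg: "nccc_avg_deg G = real n * real p"
  proof -
    have "(\<Sum>i<m. \<Sum>j<m. (kmat m c :: real mat) $$ (i, j)) = (\<Sum>i<m. real (p*n))"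
      using rowsum by simp
    also have "\<dots> = real m * (real n * real p)" by simp
    finally show ?thesis unfolding nccc_avg_deg_def Let_def A m_def[symmetric] dimK
      using mpos by simp
  qed
  have e1: "energy G = 2 * real n * real p"
    unfolding energy_def sA by (simp add: algebra_simps)
  have e2: "lap_energy G = 2 * real n * real p"
    unfolding lap_energy_def sL avg by (simp add: algebra_simps)
  have e3: "slap_energy G = 2 * real n * real p"
    unfolding slap_energy_def sQ avg using p2 by (simp add: algebra_simps)
  show ?thesis using sA sL sQ e1 e2 e3 by blast
qed

end
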